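(* Let $G$ be an $r$-regular graph with $k$ vertices, and for $d\ge 1$ let $G^d$ denote the join of $d$ identical copies of $G$. Then there exists a natural number $d_0$ such that for all $d\ge d_0$, $G^d$ is a Ramanujan graph.
   Context: All graphs are finite, simple and undirected. The join of graphs $G_1,\ldots,G_d$ is obtained from their disjoint union by adding an edge between every vertex of $G_i$ and every vertex of $G_j$ for all $i\ne j$. A connected $r$-regular graph with adjacency eigenvalues $\lambda_1\ge\cdots\ge\lambda_m$ (so $|\lambda_i|\le r$) is a Ramanujan graph if $\max_{|\lambda_i|<r}|\lambda_i|\le 2\sqrt{r-1}$. *)

theory Defs
  imports Complex_Main
begin

definition simple_graph :: "'a set \<Rightarrow> ('a \<Rightarrow> 'a \<Rightarrow> bool) \<Rightarrow> bool" where
  "simple_graph V E \<longleftrightarrow> finite V \<and> (\<forall>u v. E u v \<longrightarrow> u \<in> V \<and> v \<in> V)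
     \<and> (\<forall>u v. E u v \<longrightarrow> E v u) \<and> (\<forall>u. \<not> E u u)"

definition neighbours :: "'a set \<Rightarrow> ('a \<Rightarrow> 'a \<Rightarrow> bool) \<Rightarrow> 'a \<Rightarrow> 'a set" where
  "neighbours V E v = {u \<in> V. E v u}"

definition regular :: "'a set \<Rightarrow> ('a \<Rightarrow> 'a \<Rightarrow> bool) \<Rightarrow> nat \<Rightarrow> bool" where
  "regular V E r \<longleftrightarrow> (\<forall>v\<in>V. card (neighbours V E v) = r)"

definition connected_graph :: "'a set \<Rightarrow> ('a \<Rightarrow> 'a \<Rightarrow> bool) \<Rightarrow> bool" where
  "connected_graph V E \<longleftrightarrow> V \<noteq> {} \<and> (\<forall>u\<in>V. \<forall>v\<in>V. E\<^sup>*\<^sup>* u v)"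

definition adj_eigenvalue :: "'a set \<Rightarrow> ('a \<Rightarrow> 'a \<Rightarrow> bool) \<Rightarrow> real \<Rightarrow> bool" where
  "adj_eigenvalue V E \<mu> \<longleftrightarrow> (\<exists>x :: 'a \<Rightarrow> real. (\<exists>v\<in>V. x v \<noteq> 0) \<and>
     (\<forall>v\<in>V. (\<Sum>u\<in>neighbours V E v. x u) = \<mu> * x v))"

definition ramanujan :: "'a set \<Rightarrow> ('a \<Rightarrow> 'a \<Rightarrow> bool) \<Rightarrow> bool" where
  "ramanujan V E \<longleftrightarrow> simple_graph V E \<and> connected_graph V E \<and>
     (\<exists>r::nat. regular V E r \<and>
        (\<forall>\<mu>. adj_eigenvalue V E \<mu> \<longrightarrow> \<bar>\<mu>\<bar> < real r \<longrightarrow> \<bar>\<mu>\<bar> \<le> 2 * sqrt (real r - 1)))"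

definition join_vertices :: "'a set \<Rightarrow> nat \<Rightarrow> ('a \<times> nat) set" where
  "join_vertices V d = V \<times> {..<d}"

definition join_edges :: "'a set \<Rightarrow> ('a \<Rightarrow> 'a \<Rightarrow> bool) \<Rightarrow> nat \<Rightarrow> ('a \<times> nat) \<Rightarrow> ('a \<times> nat) \<Rightarrow> bool" where
  "join_edges V E d = (\<lambda>(u,i) (v,j). u \<in> V \<and> v \<in> V \<and> i < d \<and> j < d \<and>
      (if i = j then E u v else True))"

end

theory Submission
  imports Defs
begin

lemma nbsum:
  assumes "finite V"
  shows "(\<Sum>u\<in>neighbours V E v. x u) = (\<Sum>u\<in>V. if E v u then x u else 0)"
  unfolding neighbours_def using assms by (simp add: sum.inter_filter)

lemma regular_sum:
  fixes x :: "'a \<Rightarrow> real"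
  assumes sg: "simple_graph V E" and rg: "regular V E R"
    and ev: "\<forall>v\<in>V. (\<Sum>u\<in>neighbours V E v. x u) = \<mu> * x v"
  shows "(real R - \<mu>) * (\<Sum>v\<in>V. x v) = 0"
proof -
  have fin: "finite V" using sg simple_graph_def by blast
  have "(\<Sum>v\<in>V. \<mu> * x v) = (\<Sum>v\<in>V. \<Sum>u\<in>V. if E v u then x u else 0)"
    using ev by (intro sum.cong refl) (simp add: nbsum[OF fin, symmetric])
  also have "\<dots> = (\<Sum>u\<in>V. \<Sum>v\<in>V. if E v u then x u else 0)"
    by (rule sum.swap)
  also have "\<dots> = (\<Sum>u\<in>V. x u * real R)"
  proof (rule sum.cong[OF refl])
    fix u assume u: "u \<in> V"
    have "(\<Sum>v\<in>V. if E v u then x u else 0) = (\<Sum>v\<in>{v\<in>V. E v u}. x u)"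
      using fin by (simp add: sum.inter_filter[symmetric])
    also have "{v\<in>V. E v u} = neighbours V E u"
      using sg unfolding neighbours_def simple_graph_def by blast
    also have "(\<Sum>v\<in>neighbours V E u. x u) = x u * real R"
      using rg u unfolding regular_def by simp
    finally show "(\<Sum>v\<in>V. if E v u then x u else 0) = x u * real R" .
  qed
  finally have "(\<Sum>v\<in>V. \<mu> * x v) = (\<Sum>u\<in>V. x u * real R)" .
  then have "\<mu> * (\<Sum>v\<in>V. x v) = real R * (\<Sum>v\<in>V. x v)"
    by (simp add: sum_distrib_left sum_distrib_right mult.commute)
  then show ?thesis by (auto simp: algebra_simps)
qed

lemma join_nb:
  assumes "v \<in> V" "i < d"
  shows "neighbours (join_vertices V d) (join_edges V E d) (v,i)
     = (neighbours V E v \<times> {i}) \<union> (V \<times> ({..<d} - {i}))"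
  using assms unfolding neighbours_def join_vertices_def join_edges_def by auto

lemma join_simple:
  assumes "simple_graph V E"
  shows "simple_graph (join_vertices V d) (join_edges V E d)"
  using assms unfolding simple_graph_def join_vertices_def join_edges_def by auto

lemma join_regular:
  assumes sg: "simple_graph V E" and rg: "regular V E r" and k: "card V = k"
  shows "regular (join_vertices V d) (join_edges V E d) (r + k * (d - 1))"
  unfolding regular_def
proof
  fix z assume "z \<in> join_vertices V d"
  then obtain v i where z: "z = (v,i)" "v \<in> V" "i < d" unfolding join_vertices_def by auto
  have fin: "finite V" using sg simple_graph_def by blast
  have nbfin: "finite (neighbours V E v)" using fin unfolding neighbours_def by simp
  have dis: "(neighbours V E v \<times> {i}) \<inter> (V \<times> ({..<d} - {i})) = {}" by auto
  have "card (neighbours (join_vertices V d) (join_edges V E d) z)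
      = card (neighbours V E v \<times> {i}) + card (V \<times> ({..<d} - {i}))"
    unfolding z(1) join_nb[OF z(2,3)]
    by (rule card_Un_disjoint) (use fin nbfin dis in auto)
  also have "\<dots> = r + k * (d - 1)"
    using rg z k unfolding regular_def by (simp add: card_cartesian_product)
  finally show "card (neighbours (join_vertices V d) (join_edges V E d) z) = r + k * (d - 1)" .
qed

lemma join_connected:
  assumes "V \<noteq> {}" "d \<ge> 2"
  shows "connected_graph (join_vertices V d) (join_edges V E d)"
  unfolding connected_graph_def
proof (intro conjI ballI)
  show "join_vertices V d \<noteq> {}" using assms unfolding join_vertices_def by (auto simp: lessThan_empty_iff)
next
  fix a b assume a: "a \<in> join_vertices V d" and b: "b \<in> join_vertices V d"
  obtain u i where ai: "a = (u,i)" "u \<in> V" "i < d" using a unfolding join_vertices_def by auto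
  obtain v j where bj: "b = (v,j)" "v \<in> V" "j < d" using b unfolding join_vertices_def by auto
  define j' where "j' = (if i = 0 then 1 else 0::nat)"
  have j': "j' < d" "j' \<noteq> i" using assms(2) unfolding j'_def by auto
  show "(join_edges V E d)\<^sup>*\<^sup>* a b"
  proof (cases "i = j")
    case False
    then have "join_edges V E d a b" using ai bj unfolding join_edges_def by auto
    then show ?thesis by auto
  next
    case True
    have 1: "join_edges V E d a (u,j')" using ai j' unfolding join_edges_def by auto
    have 2: "join_edges V E d (u,j') b" using ai bj j' True unfolding join_edges_def by auto
    show ?thesis using 1 2 by (meson r_into_rtranclp rtranclp.rtrancl_into_rtrancl)
  qed
qed

lemma eig_bound:
  assumes sg: "simple_graph V E" and rg: "regular V E r" and k: "card V = k"
    and ev: "adj_eigenvalue (join_vertices V d) (join_edges V E d) \<mu>"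
    and lt: "\<bar>\<mu>\<bar> < real (r + k * (d - 1))"
  shows "\<bar>\<mu>\<bar> \<le> real k"
proof -
  let ?W = "join_vertices V d" and ?F = "join_edges V E d"
  have fin: "finite V" using sg simple_graph_def by blast
  have finW: "finite ?W" using fin unfolding join_vertices_def by simp
  obtain x where nz: "\<exists>w\<in>?W. x w \<noteq> 0"
    and eq: "\<forall>w\<in>?W. (\<Sum>u\<in>neighbours ?W ?F w. x u) = \<mu> * x w"
    using ev unfolding adj_eigenvalue_def by blast
  have "(real (r + k * (d - 1)) - \<mu>) * (\<Sum>w\<in>?W. x w) = 0"
    by (rule regular_sum[OF join_simple[OF sg] join_regular[OF sg rg k] eq])
  moreover have "real (r + k * (d - 1)) - \<mu> \<noteq> 0" using lt by auto
  ultimately have S0: "(\<Sum>w\<in>?W. x w) = 0" by simp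
  have neW: "?W \<noteq> {}" using nz by auto
  obtain z0 where z0: "z0 \<in> ?W" "\<forall>w\<in>?W. \<bar>x w\<bar> \<le> \<bar>x z0\<bar>"
  proof -
    have "Max ((\<lambda>w. \<bar>x w\<bar>) ` ?W) \<in> (\<lambda>w. \<bar>x w\<bar>) ` ?W"
      using finW neW by (intro Max_in) auto
    then obtain z0 where "z0 \<in> ?W" "\<bar>x z0\<bar> = Max ((\<lambda>w. \<bar>x w\<bar>) ` ?W)" by auto
    moreover have "\<forall>w\<in>?W. \<bar>x w\<bar> \<le> Max ((\<lambda>w. \<bar>x w\<bar>) ` ?W)"
      using finW by auto
    ultimately show ?thesis using that by auto
  qed
  define M where "M = \<bar>x z0\<bar>"
  have Mpos: "M > 0" using nz z0 unfolding M_def by fastforce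
  obtain v i where vi: "z0 = (v,i)" "v \<in> V" "i < d" using z0(1) unfolding join_vertices_def by auto
  have sub: "neighbours ?W ?F z0 \<subseteq> ?W" unfolding neighbours_def by auto
  have "(\<Sum>w\<in>?W. x w) = (\<Sum>w\<in>neighbours ?W ?F z0. x w) + (\<Sum>w\<in>?W - neighbours ?W ?F z0. x w)"
    using sum.subset_diff[OF sub finW, of x] by (simp add: add.commute)
  then have "\<mu> * x z0 = - (\<Sum>w\<in>?W - neighbours ?W ?F z0. x w)"
    using S0 eq z0(1) by simp
  then have "\<bar>\<mu>\<bar> * M = \<bar>\<Sum>w\<in>?W - neighbours ?W ?F z0. x w\<bar>"
    unfolding M_def by (metis abs_minus_cancel abs_mult)
  also have "\<dots> \<le> (\<Sum>w\<in>?W - neighbours ?W ?F z0. \<bar>x w\<bar>)" by (rule sum_abs)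
  also have "\<dots> \<le> (\<Sum>w\<in>V \<times> {i}. \<bar>x w\<bar>)"
  proof (rule sum_mono2)
    show "finite (V \<times> {i})" using fin by simp
    show "?W - neighbours ?W ?F z0 \<subseteq> V \<times> {i}"
    proof -
      have "neighbours ?W ?F z0 = (neighbours V E v \<times> {i}) \<union> (V \<times> ({..<d} - {i}))"
        using join_nb[OF vi(2,3)] vi(1) by simp
      then show ?thesis unfolding join_vertices_def by auto
    qed
  qed auto
  also have "\<dots> \<le> (\<Sum>w\<in>V \<times> {i}. M)"
    by (rule sum_mono) (use z0 vi M_def in \<open>auto simp: join_vertices_def\<close>)
  also have "\<dots> = real k * M" using k by (simp add: card_cartesian_product)
  finally have "\<bar>\<mu>\<bar> * M \<le> real k * M" .
  then show ?thesis using Mpos by simp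
qed

theorem mainTheorem6:
  fixes V :: "'a set" and E :: "'a \<Rightarrow> 'a \<Rightarrow> bool" and r k :: nat
  assumes "simple_graph V E" and "V \<noteq> {}" and "regular V E r" and "card V = k"
  shows "\<exists>d0::nat. \<forall>d\<ge>d0. d \<ge> 1 \<longrightarrow> ramanujan (join_vertices V d) (join_edges V E d)"
proof (intro exI allI impI)
  fix d :: nat assume d: "d \<ge> k^2 + 2" "d \<ge> 1"
  have fin: "finite V" using assms(1) simple_graph_def by blast
  have kpos: "k \<ge> 1" using assms(2,4) fin by (metis card_0_eq less_one not_le)
  let ?R = "r + k * (d - 1)"
  have "k * (d - 1) \<ge> d - 1" using kpos by simp
  then have R1: "real ?R - 1 \<ge> real (k^2)" using d(1) by linarith
  have "real k \<le> sqrt (real (k^2))" by simp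
  also have "\<dots> \<le> sqrt (real ?R - 1)" using R1 by (rule real_sqrt_le_mono)
  finally have kb: "real k \<le> 2 * sqrt (real ?R - 1)"
    using real_sqrt_ge_zero[of "real ?R - 1"] R1 by linarith
  show "ramanujan (join_vertices V d) (join_edges V E d)"
    unfolding ramanujan_def
  proof (intro conjI exI[of _ ?R] allI impI)
    show "simple_graph (join_vertices V d) (join_edges V E d)" by (rule join_simple[OF assms(1)])
    show "connected_graph (join_vertices V d) (join_edges V E d)"
      using join_connected[OF assms(2)] d(1) by simp
    show "regular (join_vertices V d) (join_edges V E d) ?R" by (rule join_regular[OF assms(1,3,4)])
    fix \<mu> assume "adj_eigenvalue (join_vertices V d) (join_edges V E d) \<mu>" "\<bar>\<mu>\<bar> < real ?R"
    then have "\<bar>\<mu>\<bar> \<le> real k" using eig_bound[OF assms(1,3,4)] by blast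
    then show "\<bar>\<mu>\<bar> \<le> 2 * sqrt (real ?R - 1)" using kb by linarith
  qed
qed

end
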